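(* The function $h:2^V\to\mathbb{R}$, $h(A)=\sum_{v\in V}h_A(v)$, is non-decreasing and submodular: for all $A\subseteq B\subseteq V$, $h(A)\le h(B)$, and for all $x\in V$, $h(B\cup\{x\})-h(B)\le h(A\cup\{x\})-h(A)$.
   Context: $G=(V,E,w)$ is a finite simple undirected graph with positive edge weights $w$. $N_A(v)=N(v)\cap A$, $W_A(v)=\sum_{u\in N_A(v)}w_{(v,u)}$, $W(v)=W_V(v)$. Define $h_A(v)=W(v)/2$ if $v\in A$ or $W_A(v)\ge W(v)/2$, and $h_A(v)=W_A(v)$ otherwise. *)

theory Defs
  imports Complex_Main
begin

definition wgraph :: "'a set \<Rightarrow> ('a \<Rightarrow> 'a \<Rightarrow> bool) \<Rightarrow> ('a \<Rightarrow> 'a \<Rightarrow> real) \<Rightarrow> bool" where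
  "wgraph V E w \<longleftrightarrow> finite V
     \<and> (\<forall>u v. E u v \<longrightarrow> u \<in> V \<and> v \<in> V)
     \<and> (\<forall>u v. E u v \<longrightarrow> E v u)
     \<and> (\<forall>v. \<not> E v v)
     \<and> (\<forall>u v. E u v \<longrightarrow> w u v > 0 \<and> w u v = w v u)"

definition nbhd :: "('a \<Rightarrow> 'a \<Rightarrow> bool) \<Rightarrow> 'a set \<Rightarrow> 'a \<Rightarrow> 'a set" where
  "nbhd E A v = {u \<in> A. E v u}"

definition wdeg :: "('a \<Rightarrow> 'a \<Rightarrow> bool) \<Rightarrow> ('a \<Rightarrow> 'a \<Rightarrow> real) \<Rightarrow> 'a set \<Rightarrow> 'a \<Rightarrow> real" where
  "wdeg E w A v = (\<Sum>u\<in>nbhd E A v. w v u)"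

definition hloc :: "'a set \<Rightarrow> ('a \<Rightarrow> 'a \<Rightarrow> bool) \<Rightarrow> ('a \<Rightarrow> 'a \<Rightarrow> real) \<Rightarrow> 'a set \<Rightarrow> 'a \<Rightarrow> real" where
  "hloc V E w A v = (if v \<in> A \<or> wdeg E w A v \<ge> wdeg E w V v / 2
                     then wdeg E w V v / 2 else wdeg E w A v)"

definition hfun :: "'a set \<Rightarrow> ('a \<Rightarrow> 'a \<Rightarrow> bool) \<Rightarrow> ('a \<Rightarrow> 'a \<Rightarrow> real) \<Rightarrow> 'a set \<Rightarrow> real" where
  "hfun V E w A = (\<Sum>v\<in>V. hloc V E w A v)"

end

theory Submission
  imports Defs
begin

lemma hloc_alt: "hloc V E w A v = (if v \<in> A then wdeg E w V v / 2 else min (wdeg E w V v / 2) (wdeg E w A v))"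
  unfolding hloc_def by auto

lemma wdeg_mono:
  assumes "wgraph V E w" "A \<subseteq> B" "finite B"
  shows "wdeg E w A v \<le> wdeg E w B v"
proof -
  have "nbhd E A v \<subseteq> nbhd E B v" using assms(2) unfolding nbhd_def by auto
  moreover have "finite (nbhd E B v)" using assms(3) unfolding nbhd_def by auto
  moreover have "\<forall>u\<in>nbhd E B v. 0 \<le> w v u" using assms(1) unfolding nbhd_def wgraph_def
    by (auto intro: less_imp_le)
  ultimately show ?thesis unfolding wdeg_def by (intro sum_mono2) auto
qed

lemma wdeg_ins:
  assumes "wgraph V E w" "finite S"
  shows "wdeg E w (insert x S) v = wdeg E w S v + (if x \<notin> S \<and> E v x then w v x else 0)"
proof (cases "x \<notin> S \<and> E v x")
  case True
  then have "nbhd E (insert x S) v = insert x (nbhd E S v)" "x \<notin> nbhd E S v"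
    unfolding nbhd_def by auto
  moreover have "finite (nbhd E S v)" using assms(2) unfolding nbhd_def by auto
  ultimately show ?thesis using True unfolding wdeg_def by simp
next
  case False
  then have "nbhd E (insert x S) v = nbhd E S v" unfolding nbhd_def by auto
  then show ?thesis using False unfolding wdeg_def by auto
qed

lemma wpos: "wgraph V E w \<Longrightarrow> E v x \<Longrightarrow> w v x > 0"
  unfolding wgraph_def by auto

lemma hloc_mono:
  assumes "wgraph V E w" "A \<subseteq> B" "B \<subseteq> V"
  shows "hloc V E w A v \<le> hloc V E w B v"
proof -
  have fB: "finite B" using assms wgraph_def finite_subset by metis
  have "wdeg E w A v \<le> wdeg E w B v" using wdeg_mono[OF assms(1,2) fB] .
  then show ?thesis unfolding hloc_alt using assms(2) by auto
qed

lemma hloc_sub: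
  assumes "wgraph V E w" "A \<subseteq> B" "B \<subseteq> V"
  shows "hloc V E w (B \<union> {x}) v - hloc V E w B v \<le> hloc V E w (A \<union> {x}) v - hloc V E w A v"
proof -
  have fB: "finite B" using assms wgraph_def finite_subset by metis
  have fA: "finite A" using fB assms(2) finite_subset by metis
  have m: "wdeg E w A v \<le> wdeg E w B v" using wdeg_mono[OF assms(1,2) fB] .
  have iA: "wdeg E w (insert x A) v = wdeg E w A v + (if x \<notin> A \<and> E v x then w v x else 0)"
    using wdeg_ins[OF assms(1) fA] .
  have iB: "wdeg E w (insert x B) v = wdeg E w B v + (if x \<notin> B \<and> E v x then w v x else 0)"
    using wdeg_ins[OF assms(1) fB] .
  have p: "E v x \<Longrightarrow> w v x > 0" using wpos[OF assms(1)] .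
  show ?thesis unfolding hloc_alt Un_insert_right Un_empty_right
    using m iA iB p assms(2)
    by (cases "v \<in> A"; cases "v \<in> B"; cases "x = v"; cases "x \<in> A"; cases "x \<in> B"; cases "E v x";
        simp add: min_def split: if_splits; linarith?; auto)
qed

theorem mainTheorem12:
  fixes V :: "'a set" and E :: "'a \<Rightarrow> 'a \<Rightarrow> bool" and w :: "'a \<Rightarrow> 'a \<Rightarrow> real"
  assumes "wgraph V E w"
  shows "\<forall>A B. A \<subseteq> B \<and> B \<subseteq> V \<longrightarrow>
           hfun V E w A \<le> hfun V E w B \<and>
           (\<forall>x\<in>V. hfun V E w (B \<union> {x}) - hfun V E w B
                    \<le> hfun V E w (A \<union> {x}) - hfun V E w A)"
proof (intro allI impI conjI ballI)
  fix A B assume h: "A \<subseteq> B \<and> B \<subseteq> V"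
  show "hfun V E w A \<le> hfun V E w B" unfolding hfun_def
    by (rule sum_mono) (use hloc_mono[OF assms] h in auto)
  fix x assume "x \<in> V"
  have "hfun V E w (B \<union> {x}) - hfun V E w B = (\<Sum>v\<in>V. hloc V E w (B \<union> {x}) v - hloc V E w B v)"
    unfolding hfun_def by (simp add: sum_subtractf)
  also have "\<dots> \<le> (\<Sum>v\<in>V. hloc V E w (A \<union> {x}) v - hloc V E w A v)"
    by (rule sum_mono) (use hloc_sub[OF assms] h in auto)
  also have "\<dots> = hfun V E w (A \<union> {x}) - hfun V E w A"
    unfolding hfun_def by (simp add: sum_subtractf)
  finally show "hfun V E w (B \<union> {x}) - hfun V E w B \<le> hfun V E w (A \<union> {x}) - hfun V E w A" .
qed

end
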